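(* Let $F=(f_t)_{t\in\mathbb{R}}$ be a continuous flow on a compact metric space $X$, and suppose the $F$-invariant Borel probability measure $\mu$ is almost expansive at scale $\varepsilon$. Let $\gamma\in(0,\varepsilon/2]$, and for each $t>0$ let $\mathcal{A}_t$ be an adapted partition for a $(t,\gamma)$-separated set of maximal cardinality. Let $Q\subset X$ be a measurable $F$-invariant set. Then for every $\alpha>0$ there exists $t_0$ such that for every $t\ge t_0$ there is a subcollection $U\subset\mathcal{A}_t$ with $\mu(U\triangle Q)<\alpha$ (where $U$ also denotes the union of its elements).
   Context: $d_t(x,y)=\sup_{s\in[0,t]}d(f_sx,f_sy)$, $B_t(x,r)=\{y:d_t(x,y)<r\}$, $\overline B_t(x,r)=\{y:d_t(x,y)\le r\}$; $E$ is $(t,\gamma)$-separated if $d_t(x,y)>\gamma$ for distinct $x,y\in E$. If $E_t$ is a $(t,\gamma)$-separated set of maximal cardinality, a partition $\mathcal{A}_t$ of $X$ is adapted to $E_t$ if for every $w\in\mathcal{A}_t$ there is $x\in E_t$ with $B_t(x,\gamma/2)\subset w\subset\overline B_t(x,\gamma)$. $\Gamma_\varepsilon(x)=\{y:d(f_sx,f_sy)\le\varepsilon\ \forall s\in\mathbb{R}\}$, $\mathrm{NE}(\varepsilon)=\{x:\Gamma_\varepsilon(x)\not\subset\{f_sx:s\in\mathbb{R}\}\}$; $\mu$ is almost expansive at scale $\varepsilon$ if $\mu(\mathrm{NE}(\varepsilon))=0$. *)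

theory Defs
  imports "HOL-Probability.Probability"
begin

definition is_continuous_flow :: "(real \<Rightarrow> 'a::topological_space \<Rightarrow> 'a) \<Rightarrow> bool" where
  "is_continuous_flow f \<longleftrightarrow>
     continuous_on UNIV (\<lambda>p. f (fst p) (snd p)) \<and>
     (\<forall>x. f 0 x = x) \<and>
     (\<forall>s t x. f (s + t) x = f s (f t x))"

definition bowen_dist :: "(real \<Rightarrow> 'a::metric_space \<Rightarrow> 'a) \<Rightarrow> real \<Rightarrow> 'a \<Rightarrow> 'a \<Rightarrow> real" where
  "bowen_dist f t x y = (SUP s\<in>{0..t}. dist (f s x) (f s y))"

definition bowen_ball :: "(real \<Rightarrow> 'a::metric_space \<Rightarrow> 'a) \<Rightarrow> real \<Rightarrow> 'a \<Rightarrow> real \<Rightarrow> 'a set" where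
  "bowen_ball f t x r = {y. bowen_dist f t x y < r}"

definition bowen_cball :: "(real \<Rightarrow> 'a::metric_space \<Rightarrow> 'a) \<Rightarrow> real \<Rightarrow> 'a \<Rightarrow> real \<Rightarrow> 'a set" where
  "bowen_cball f t x r = {y. bowen_dist f t x y \<le> r}"

definition separated :: "(real \<Rightarrow> 'a::metric_space \<Rightarrow> 'a) \<Rightarrow> real \<Rightarrow> real \<Rightarrow> 'a set \<Rightarrow> bool" where
  "separated f t \<gamma> E \<longleftrightarrow> (\<forall>x\<in>E. \<forall>y\<in>E. x \<noteq> y \<longrightarrow> bowen_dist f t x y > \<gamma>)"

text \<open>A (t,gamma)-separated set of maximal cardinality (separated sets are finite in a compact space).\<close>
definition max_separated :: "(real \<Rightarrow> 'a::metric_space \<Rightarrow> 'a) \<Rightarrow> real \<Rightarrow> real \<Rightarrow> 'a set \<Rightarrow> bool" where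
  "max_separated f t \<gamma> E \<longleftrightarrow> finite E \<and> separated f t \<gamma> E \<and>
     (\<forall>E'. separated f t \<gamma> E' \<longrightarrow> finite E' \<and> card E' \<le> card E)"

definition borel_partition :: "'a::topological_space set set \<Rightarrow> bool" where
  "borel_partition P \<longleftrightarrow> \<Union>P = UNIV \<and> {} \<notin> P \<and>
     (\<forall>w\<in>P. \<forall>w'\<in>P. w \<noteq> w' \<longrightarrow> w \<inter> w' = {}) \<and> (\<forall>w\<in>P. w \<in> sets borel)"

definition adapted_partition ::
  "(real \<Rightarrow> 'a::metric_space \<Rightarrow> 'a) \<Rightarrow> real \<Rightarrow> real \<Rightarrow> 'a set \<Rightarrow> 'a set set \<Rightarrow> bool" where
  "adapted_partition f t \<gamma> E P \<longleftrightarrow> borel_partition P \<and>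
     (\<forall>w\<in>P. \<exists>x\<in>E. bowen_ball f t x (\<gamma>/2) \<subseteq> w \<and> w \<subseteq> bowen_cball f t x \<gamma>)"

definition Gamma_set :: "(real \<Rightarrow> 'a::metric_space \<Rightarrow> 'a) \<Rightarrow> real \<Rightarrow> 'a \<Rightarrow> 'a set" where
  "Gamma_set f \<epsilon> x = {y. \<forall>s. dist (f s x) (f s y) \<le> \<epsilon>}"

definition NE :: "(real \<Rightarrow> 'a::metric_space \<Rightarrow> 'a) \<Rightarrow> real \<Rightarrow> 'a set" where
  "NE f \<epsilon> = {x. \<not> Gamma_set f \<epsilon> x \<subseteq> range (\<lambda>s. f s x)}"

text \<open>mu(NE(eps)) = 0, read as: NE(eps) is contained in a mu-null set.\<close>
definition almost_expansive :: "(real \<Rightarrow> 'a::metric_space \<Rightarrow> 'a) \<Rightarrow> 'a measure \<Rightarrow> real \<Rightarrow> bool" where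
  "almost_expansive f \<mu> \<epsilon> \<longleftrightarrow> (\<exists>N\<in>null_sets \<mu>. NE f \<epsilon> \<subseteq> N)"

definition flow_invariant_measure :: "(real \<Rightarrow> 'a::topological_space \<Rightarrow> 'a) \<Rightarrow> 'a measure \<Rightarrow> bool" where
  "flow_invariant_measure f \<mu> \<longleftrightarrow>
     (\<forall>t. \<forall>A\<in>sets \<mu>. emeasure \<mu> (f t -` A) = emeasure \<mu> A)"

end

theory Submission imports Defs begin


lemma open_inner_closed:
  fixes M :: "'a::metric_space measure"
  assumes fm: "finite_measure M" and sb: "sets M = sets borel" and a: "open a" and d: "\<delta> > 0"
  shows "\<exists>F. closed F \<and> F \<subseteq> a \<and> measure M (a - F) < \<delta>"
proof -
  interpret finite_measure M by (rule fm)
  define F where "F n = (\<Inter>y\<in>-a. - ball y (1 / Suc n))" for n :: nat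
  have cl: "closed (F n)" for n unfolding F_def by (intro closed_INT) auto
  have sub: "F n \<subseteq> a" for n
  proof
    fix x assume "x \<in> F n"
    show "x \<in> a"
    proof (rule ccontr)
      assume "x \<notin> a"
      then have "x \<notin> ball x (1 / Suc n)" using \<open>x \<in> F n\<close> unfolding F_def by blast
      then show False by simp
    qed
  qed
  have inc: "incseq F"
  proof (rule incseq_SucI)
    fix n
    have "ball y (1 / Suc (Suc n)) \<subseteq> ball y (1 / Suc n)" for y :: 'a
      by (rule subset_ball) (simp add: frac_le)
    then show "F n \<subseteq> F (Suc n)" unfolding F_def by blast
  qed
  have un: "(\<Union>n. F n) = a"
  proof
    show "(\<Union>n. F n) \<subseteq> a" using sub by auto
    show "a \<subseteq> (\<Union>n. F n)"
    proof
      fix x assume "x \<in> a"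
      then obtain e where e: "e > 0" "ball x e \<subseteq> a" using a open_contains_ball by blast
      obtain n where n: "1 / Suc n < e" using e(1) nat_approx_posE by blast
      have "x \<in> F n" unfolding F_def
      proof (auto simp: ball_def)
        fix y assume "y \<notin> a" "dist y x < 1 / (1 + real n)"
        then have "y \<in> ball x e" using n by (simp add: dist_commute ball_def)
        then show False using e(2) \<open>y \<notin> a\<close> by auto
      qed
      then show "x \<in> (\<Union>n. F n)" by auto
    qed
  qed
  have ms: "range F \<subseteq> sets M" using cl sb by auto
  have "(\<lambda>n. measure M (F n)) \<longlonglongrightarrow> measure M a"
    using finite_Lim_measure_incseq[OF ms inc] un by simp
  from LIMSEQ_D[OF this d] obtain n where "norm (measure M (F n) - measure M a) < \<delta>"
    by blast
  moreover have "measure M (a - F n) = measure M a - measure M (F n)"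
    using sub cl a sb by (intro finite_measure_Diff) auto
  ultimately have "measure M (a - F n) < \<delta>" by simp
  then show ?thesis using cl sub by blast
qed

lemma borel_regular_closed_open:
  fixes M :: "'a::metric_space measure"
  assumes fm: "finite_measure M" and sb: "sets M = sets borel" and B: "B \<in> sets borel"
  shows "\<forall>\<delta>>0. \<exists>F G. closed F \<and> open G \<and> F \<subseteq> B \<and> B \<subseteq> G \<and> measure M (G - F) < \<delta>"
proof -
  interpret finite_measure M by (rule fm)
  have "B \<in> sigma_sets UNIV {S. open S}" using B sets_borel by auto
  then show ?thesis
  proof (induction rule: sigma_sets.induct)
    case (Basic a)
    have oa: "open a" using Basic by simp
    show ?case
    proof (intro allI impI)
      fix \<delta> :: real assume d: "\<delta> > 0"
      obtain F where F: "closed F" "F \<subseteq> a" "measure M (a - F) < \<delta>"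
        using open_inner_closed[OF fm sb oa d] by blast
      show "\<exists>F G. closed F \<and> open G \<and> F \<subseteq> a \<and> a \<subseteq> G \<and> measure M (G - F) < \<delta>"
        using F oa by blast
    qed
  next
    case Empty
    show ?case by (intro allI impI exI[of _ "{}"] conjI) auto
  next
    case (Compl a)
    show ?case
    proof (intro allI impI)
      fix \<delta> :: real assume d: "\<delta> > 0"
      from Compl.IH[rule_format, OF d] obtain F G where FG: "closed F" "open G" "F \<subseteq> a" "a \<subseteq> G" "measure M (G - F) < \<delta>"
        by blast
      have eq: "(UNIV - F) - (UNIV - G) = G - F" by auto
      have c1: "closed (UNIV - G)" by (rule closed_Diff) (auto simp: FG(2))
      have c2: "open (UNIV - F)" by (rule open_Diff) (auto simp: FG(1))
      have m: "measure M ((UNIV - F) - (UNIV - G)) < \<delta>" unfolding eq by (rule FG(5))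
      have s1: "UNIV - G \<subseteq> UNIV - a" "UNIV - a \<subseteq> UNIV - F" using FG(3,4) by auto
      show "\<exists>F' G'. closed F' \<and> open G' \<and> F' \<subseteq> UNIV - a \<and> UNIV - a \<subseteq> G' \<and> measure M (G' - F') < \<delta>"
        using c1 c2 m s1 by blast
    qed
  next
    case (Union a)
    show ?case
    proof (intro allI impI)
      fix \<delta> :: real assume d: "\<delta> > 0"
      define e where "e = (\<lambda>i::nat. \<delta> / 4 * (1/2) ^ i)"
      have epos: "e i > 0" for i using d by (simp add: e_def)
      have esum: "e sums (\<delta> / 2)"
        using sums_mult[OF geometric_sums[of "1/2::real"], of "\<delta>/4"] by (simp add: e_def)
      have "\<forall>i. \<exists>F G. closed F \<and> open G \<and> F \<subseteq> a i \<and> a i \<subseteq> G \<and> measure M (G - F) < e i"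
        using Union.IH[rule_format, OF epos] by blast
      then obtain F G where FG: "\<And>i. closed (F i)" "\<And>i. open (G i)" "\<And>i. F i \<subseteq> a i"
        "\<And>i. a i \<subseteq> G i" "\<And>i. measure M (G i - F i) < e i"
        by (metis (no_types))
      define H where "H n = (\<Union>i<n. F i)" for n
      have Hm: "range H \<subseteq> sets M" using FG(1) sb by (auto simp: H_def)
      have Hinc: "incseq H" unfolding H_def by (intro monoI) (auto, meson less_le_trans lessThan_iff)
      have HU: "(\<Union>n. H n) = (\<Union>i. F i)" unfolding H_def by auto
      have "(\<lambda>n. measure M (H n)) \<longlonglongrightarrow> measure M (\<Union>i. F i)"
        using finite_Lim_measure_incseq[OF Hm Hinc] HU by simp
      from LIMSEQ_D[OF this] d obtain N where N: "norm (measure M (H N) - measure M (\<Union>i. F i)) < \<delta> / 2"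
        by (metis half_gt_zero order_refl)
      have Fm: "(\<Union>i. F i) \<in> sets M" using FG(1) sb by auto
      have HN: "measure M ((\<Union>i. F i) - H N) < \<delta> / 2"
      proof -
        have "measure M ((\<Union>i. F i) - H N) = measure M (\<Union>i. F i) - measure M (H N)"
          using Fm Hm by (intro finite_measure_Diff) (auto simp: H_def)
        then show ?thesis using N by (simp only: real_norm_def)
      qed
      have Dm: "range (\<lambda>i. G i - F i) \<subseteq> sets M" using FG(1,2) sb by auto
      have se: "summable e" using esum sums_summable by blast
      have nb: "\<exists>N. \<forall>n\<ge>N. norm (measure M (G n - F n)) \<le> e n"
        using FG(5) by (intro exI[of _ 0]) (simp add: less_imp_le)
      have summ: "summable (\<lambda>i. measure M (G i - F i))"
        by (rule summable_comparison_test[OF nb se])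
      have "measure M (\<Union>i. G i - F i) \<le> (\<Sum>i. measure M (G i - F i))"
        by (rule finite_measure_subadditive_countably[OF Dm summ])
      also have "\<dots> \<le> (\<Sum>i. e i)"
        using FG(5) summ se by (intro suminf_le) (simp_all add: less_imp_le)
      also have "\<dots> = \<delta> / 2" using esum sums_unique by metis
      finally have D: "measure M (\<Union>i. G i - F i) \<le> \<delta> / 2" .
      have sub: "(\<Union>i. G i) - H N \<subseteq> (\<Union>i. G i - F i) \<union> ((\<Union>i. F i) - H N)" by auto
      have "measure M ((\<Union>i. G i) - H N) \<le> measure M ((\<Union>i. G i - F i) \<union> ((\<Union>i. F i) - H N))"
        using Dm Fm Hm by (intro finite_measure_mono[OF sub]) auto
      also have "\<dots> \<le> measure M (\<Union>i. G i - F i) + measure M ((\<Union>i. F i) - H N)"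
        using Dm Fm Hm by (intro measure_Un_le) auto
      also have "\<dots> < \<delta>" using D HN by simp
      finally have "measure M ((\<Union>i. G i) - H N) < \<delta>" .
      moreover have "closed (H N)" unfolding H_def using FG(1) by auto
      moreover have "open (\<Union>i. G i)" using FG(2) by auto
      moreover have "H N \<subseteq> \<Union>(range a)" using FG(3) by (auto simp: H_def)
      moreover have "\<Union>(range a) \<subseteq> (\<Union>i. G i)" using FG(4) by auto
      ultimately show "\<exists>F G. closed F \<and> open G \<and> F \<subseteq> \<Union>(range a) \<and> \<Union>(range a) \<subseteq> G \<and> measure M (G - F) < \<delta>"
        by blast
    qed
  qed
qed



lemma flow_cont:
  assumes "is_continuous_flow f" shows "continuous_on UNIV (f t)"
proof -
  have c: "continuous_on UNIV (\<lambda>p. f (fst p) (snd p))" using assms unfolding is_continuous_flow_def by blast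
  have "continuous_on UNIV ((\<lambda>p. f (fst p) (snd p)) \<circ> (\<lambda>x. (t, x)))"
    by (rule continuous_on_compose[OF _ continuous_on_subset[OF c]]) (auto intro: continuous_intros)
  then show ?thesis by (simp add: o_def)
qed

lemma bowen_le:
  fixes f :: "real \<Rightarrow> 'a::metric_space \<Rightarrow> 'a"
  assumes "compact (UNIV::'a set)" "bowen_dist f t x y \<le> r" "s \<in> {0..t}"
  shows "dist (f s x) (f s y) \<le> r"
proof -
  obtain c :: 'a and e where ce: "\<forall>z\<in>UNIV. dist c z \<le> e"
    using compact_imp_bounded[OF assms(1)] unfolding bounded_def by blast
  have de: "dist a b \<le> 2 * e" for a b :: 'a
  proof -
    have "dist a b \<le> dist a c + dist b c" by (rule dist_triangle2)
    also have "\<dots> \<le> 2 * e" using ce[rule_format, of a] ce[rule_format, of b] by (simp add: dist_commute)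
    finally show ?thesis .
  qed
  have "bdd_above ((\<lambda>s. dist (f s x) (f s y)) ` {0..t})"
    using de by (intro bdd_aboveI2) auto
  then have "dist (f s x) (f s y) \<le> bowen_dist f t x y"
    unfolding bowen_dist_def using assms(3) by (rule cSUP_upper[rotated])
  then show ?thesis using assms(2) by linarith
qed

theorem proposition3p9:
  fixes f :: "real \<Rightarrow> 'a::metric_space \<Rightarrow> 'a"
    and \<mu> :: "'a measure"
    and \<epsilon> \<gamma> :: real
    and E :: "real \<Rightarrow> 'a set"
    and A :: "real \<Rightarrow> 'a set set"
    and Q :: "'a set"
  assumes "compact (UNIV :: 'a set)"
    and "is_continuous_flow f"
    and "prob_space \<mu>" and "sets \<mu> = sets borel"
    and "flow_invariant_measure f \<mu>"
    and "almost_expansive f \<mu> \<epsilon>"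
    and "0 < \<gamma>" and "\<gamma> \<le> \<epsilon> / 2"
    and "\<And>t. t > 0 \<Longrightarrow> max_separated f t \<gamma> (E t) \<and> adapted_partition f t \<gamma> (E t) (A t)"
    and "Q \<in> sets borel" and "\<And>t. f t -` Q = Q"
  shows "\<forall>\<alpha>>0. \<exists>t0. \<forall>t\<ge>t0. \<exists>U\<subseteq>A t. measure \<mu> ((\<Union>U - Q) \<union> (Q - \<Union>U)) < \<alpha>"
proof (intro allI impI)
  fix \<alpha> :: real assume \<alpha>: "\<alpha> > 0"
  note fc = flow_cont[OF assms(2)]
  have fl: "f (a + b) x = f a (f b x)" for a b x
    using assms(2) unfolding is_continuous_flow_def by blast
  interpret prob_space \<mu> by (rule assms(3))
  have fm: "finite_measure \<mu>" by (rule finite_measure_axioms)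
  define \<delta> where "\<delta> = \<alpha> / 3"
  have \<delta>: "\<delta> > 0" using \<alpha> by (simp add: \<delta>_def)
  from borel_regular_closed_open[OF fm assms(4) assms(10), rule_format, OF \<delta>]
  obtain Fc Gc where FG: "closed Fc" "open Gc" "Fc \<subseteq> Q" "Q \<subseteq> Gc" "measure \<mu> (Gc - Fc) < \<delta>"
    by blast
  define K where "K = Fc"
  define L where "L = - Gc"
  have cK: "compact K" using compact_Int_closed[OF assms(1) FG(1)] by (simp add: K_def)
  have cL: "compact L" using compact_Int_closed[OF assms(1) closed_Compl[OF FG(2)]] by (simp add: L_def)
  have KQ: "K \<subseteq> Q" using FG(3) by (simp add: K_def)
  have LQ: "L \<inter> Q = {}" using FG(4) by (auto simp: L_def)
  have dcont: "continuous_on UNIV (\<lambda>p. dist (f s (fst p)) (f s (snd p)))" for s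
    by (auto intro!: continuous_intros continuous_on_compose2[OF fc])
  define S where "S n = (L \<times> K) \<inter> {p. \<forall>s. s \<in> {- real n..real n} \<longrightarrow> dist (f s (fst p)) (f s (snd p)) \<le> \<epsilon>}" for n :: nat
  define B where "B n = fst ` S n" for n
  have Sc: "compact (S n)" for n
    unfolding S_def
  proof (rule compact_Int_closed[OF compact_Times[OF cL cK]])
    show "closed {p. \<forall>s. s \<in> {- real n..real n} \<longrightarrow> dist (f s (fst p)) (f s (snd p)) \<le> \<epsilon>}"
    proof (intro closed_Collect_all closed_Collect_imp)
      fix s :: real
      show "open {p::'a\<times>'a. s \<in> {- real n..real n}}" by (cases "s \<in> {- real n..real n}") auto
      show "closed {p. dist (f s (fst p)) (f s (snd p)) \<le> \<epsilon>}"
        by (rule closed_Collect_le[OF dcont]) (rule continuous_on_const)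
    qed
  qed
  have Bc: "closed (B n)" for n
    unfolding B_def by (intro compact_imp_closed compact_continuous_image[OF continuous_on_fst Sc]) (rule continuous_on_id)
  have Bm: "range B \<subseteq> sets \<mu>" using Bc assms(4) by auto
  have Bdec: "decseq B"
  proof (rule decseq_SucI)
    fix n have "S (Suc n) \<subseteq> S n" unfolding S_def by auto
    then show "B (Suc n) \<subseteq> B n" unfolding B_def by (rule image_mono)
  qed
  have BNE: "(\<Inter>n. B n) \<subseteq> NE f \<epsilon>"
  proof
    fix z assume z: "z \<in> (\<Inter>n. B n)"
    have zL: "z \<in> L" using z unfolding B_def S_def by auto
    define W where "W n = {k. \<forall>s. s \<in> {- real n..real n} \<longrightarrow> dist (f s z) (f s k) \<le> \<epsilon>}" for n :: nat
    have Wc: "closed (W n)" for n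
      unfolding W_def
    proof (intro closed_Collect_all closed_Collect_imp)
      fix s :: real
      show "open {p::'a. s \<in> {- real n..real n}}" by (cases "s \<in> {- real n..real n}") auto
      show "closed {k. dist (f s z) (f s k) \<le> \<epsilon>}"
        by (rule closed_Collect_le) (auto intro!: continuous_intros continuous_on_compose2[OF fc])
    qed
    have Wmono: "W n \<subseteq> W m" if "m \<le> n" for m n
      using that unfolding W_def by auto
    have WK: "K \<inter> W n \<noteq> {}" for n
    proof -
      from z have "z \<in> B n" by auto
      then obtain p where "p \<in> S n" "z = fst p" unfolding B_def by auto
      then have "snd p \<in> K \<inter> W n" unfolding S_def W_def by auto
      then show ?thesis by blast
    qed
    have "K \<inter> (\<Inter>n\<in>UNIV. W n) \<noteq> {}"
    proof (rule compact_imp_fip_image[OF cK])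
      show "\<And>i. i \<in> UNIV \<Longrightarrow> closed (W i)" using Wc by blast
      fix I' :: "nat set" assume fin: "finite I'"
      define m where "m = Max (insert 0 I')"
      have "\<And>i. i \<in> I' \<Longrightarrow> i \<le> m" unfolding m_def using fin by auto
      then have "K \<inter> W m \<subseteq> K \<inter> (\<Inter>i\<in>I'. W i)" using Wmono by blast
      then show "K \<inter> (\<Inter>i\<in>I'. W i) \<noteq> {}" using WK[of m] by blast
    qed
    then obtain k where k: "k \<in> K" "\<And>n. k \<in> W n" by blast
    have "k \<in> Gamma_set f \<epsilon> z"
      unfolding Gamma_set_def
    proof (intro CollectI allI)
      fix s :: real
      define n where "n = nat \<lceil>\<bar>s\<bar>\<rceil>"
      have "s \<in> {- real n..real n}" unfolding n_def by auto linarith+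
      then show "dist (f s z) (f s k) \<le> \<epsilon>" using k(2)[of n] unfolding W_def by blast
    qed
    moreover have "k \<notin> range (\<lambda>s. f s z)"
    proof
      assume "k \<in> range (\<lambda>s. f s z)"
      then obtain s where ks: "k = f s z" by blast
      have "z \<notin> Q" using zL LQ by blast
      then have "z \<notin> f s -` Q" using assms(11)[of s] by simp
      then have "k \<notin> Q" using ks by simp
      then show False using k(1) KQ by blast
    qed
    ultimately show "z \<in> NE f \<epsilon>" unfolding NE_def by blast
  qed
  obtain N where N: "N \<in> null_sets \<mu>" "NE f \<epsilon> \<subseteq> N"
    using assms(6) unfolding almost_expansive_def by blast
  have "measure \<mu> (\<Inter>n. B n) \<le> measure \<mu> N"
    using BNE N by (intro finite_measure_mono) auto
  also have "measure \<mu> N = 0" using N(1) by (auto simp: measure_def null_sets_def)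
  finally have m0: "measure \<mu> (\<Inter>n. B n) = 0" using measure_nonneg[of \<mu>] by (simp add: order_antisym)
  have "(\<lambda>n. measure \<mu> (B n)) \<longlonglongrightarrow> 0"
    using finite_Lim_measure_decseq[OF Bm Bdec] m0 by simp
  from LIMSEQ_D[OF this \<delta>] obtain n0 where n0: "measure \<mu> (B n0) < \<delta>"
    by (metis order_refl abs_of_nonneg measure_nonneg real_norm_def diff_zero)
  show "\<exists>t0. \<forall>t\<ge>t0. \<exists>U\<subseteq>A t. measure \<mu> ((\<Union>U - Q) \<union> (Q - \<Union>U)) < \<alpha>"
  proof (intro exI[of _ "2 * real n0 + 1"] allI impI)
    fix t :: real assume t: "2 * real n0 + 1 \<le> t"
    define h where "h = t / 2"
    have tpos: "t > 0" using t by linarith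
    have hn: "real n0 \<le> h" using t by (simp add: h_def)
    have ap: "adapted_partition f t \<gamma> (E t) (A t)" using assms(9)[OF tpos] by blast
    have cov: "\<Union>(A t) = UNIV" using ap unfolding adapted_partition_def borel_partition_def by blast
    have cb: "\<exists>c\<in>E t. w \<subseteq> bowen_cball f t c \<gamma>" if "w \<in> A t" for w
      using ap that unfolding adapted_partition_def by blast
    define U where "U = {w \<in> A t. \<exists>k\<in>w. f h k \<in> K}"
    define X where "X = (Gc - Fc) \<union> B n0"
    have Xm: "X \<in> sets \<mu>" unfolding X_def using FG(1,2) Bc assms(4) by auto
    have pre: "f h -` X \<in> sets \<mu>"
      using measurable_sets[OF borel_measurable_continuous_onI[OF fc[of h]], of X] Xm assms(4) by simp
    have incl: "(\<Union>U - Q) \<union> (Q - \<Union>U) \<subseteq> f h -` X"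
    proof
      fix x assume x: "x \<in> (\<Union>U - Q) \<union> (Q - \<Union>U)"
      show "x \<in> f h -` X"
      proof (cases "x \<in> Q")
        case True
        then have xU: "x \<notin> \<Union>U" using x by blast
        obtain w where w: "w \<in> A t" "x \<in> w" using cov by blast
        have "f h x \<notin> K" using xU w unfolding U_def by blast
        moreover have "f h x \<in> Q" using True assms(11)[of h] by blast
        ultimately show ?thesis using FG(4) unfolding X_def K_def by blast
      next
        case False
        then obtain w where w: "w \<in> U" "x \<in> w" using x by blast
        then obtain k where k: "k \<in> w" "f h k \<in> K" and wA: "w \<in> A t" unfolding U_def by blast
        have nQ: "f h x \<notin> Q" using False assms(11)[of h] by blast
        show ?thesis
        proof (cases "f h x \<in> Gc")
          case True then show ?thesis using nQ FG(3) unfolding X_def by blast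
        next
          case False
          then have hL: "f h x \<in> L" unfolding L_def by blast
          obtain c where c: "c \<in> E t" "w \<subseteq> bowen_cball f t c \<gamma>" using cb[OF wA] by blast
          have cx: "bowen_dist f t c x \<le> \<gamma>" and ck: "bowen_dist f t c k \<le> \<gamma>"
            using c(2) w(2) k(1) unfolding bowen_cball_def by auto
          have "(f h x, f h k) \<in> S n0" unfolding S_def
          proof (intro IntI CollectI allI impI)
            show "(f h x, f h k) \<in> L \<times> K" using hL k(2) by blast
            fix s assume s: "s \<in> {- real n0..real n0}"
            have u: "s + h \<in> {0..t}" using s hn by (auto simp: h_def)
            have "dist (f (s+h) c) (f (s+h) x) \<le> \<gamma>" by (rule bowen_le[OF assms(1) cx u])
            moreover have "dist (f (s+h) c) (f (s+h) k) \<le> \<gamma>" by (rule bowen_le[OF assms(1) ck u])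
            ultimately have "dist (f (s+h) x) (f (s+h) k) \<le> \<epsilon>"
              using dist_triangle2[of "f (s+h) x" "f (s+h) k" "f (s+h) c"] assms(8)
              by (simp add: dist_commute)
            then show "dist (f s (fst (f h x, f h k))) (f s (snd (f h x, f h k))) \<le> \<epsilon>"
              by (simp add: fl)
          qed
          then have "f h x \<in> B n0" unfolding B_def by force
          then show ?thesis unfolding X_def by blast
        qed
      qed
    qed
    have "measure \<mu> ((\<Union>U - Q) \<union> (Q - \<Union>U)) \<le> measure \<mu> (f h -` X)"
      by (rule finite_measure_mono[OF incl pre])
    also have "\<dots> = measure \<mu> X"
      using assms(5) Xm unfolding flow_invariant_measure_def measure_def by simp
    also have "\<dots> \<le> measure \<mu> (Gc - Fc) + measure \<mu> (B n0)"
      unfolding X_def using FG(1,2) Bc assms(4) by (intro measure_Un_le) auto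
    also have "\<dots> < \<alpha>" using FG(5) n0 \<alpha> unfolding \<delta>_def by linarith
    finally have "measure \<mu> ((\<Union>U - Q) \<union> (Q - \<Union>U)) < \<alpha>" .
    moreover have "U \<subseteq> A t" unfolding U_def by blast
    ultimately show "\<exists>U\<subseteq>A t. measure \<mu> ((\<Union>U - Q) \<union> (Q - \<Union>U)) < \<alpha>" by blast
  qed
qed

end
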